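(* Let $K,G:[0,\infty)\to\mathbb{R}$ be continuous, let $f$ solve $f''+Kf=0$ with $f>0$ on $(0,\infty)$ and $\int_1^\infty f(t)^{-2}dt<\infty$, and let $m$ solve $m''+Gm=0$ with $m(0)=f(0)$, $m'(0)=f'(0)$. Suppose the support of $G-K$ is contained in a bounded interval $[a,b]\subset[1,\infty)$. If $\alpha(m)<1$, then $m(t)>0$ for all $t\in(0,\infty)$ and $$\int_1^\infty|f(t)^{-2}-m(t)^{-2}|\,dt\le\frac{(2+\alpha(m))\,\alpha(m)}{(1-\alpha(m))^2}\int_a^\infty f(t)^{-2}dt.$$
   Context: Notation: $\sigma(t):=m(t)/f(t)-1$ for $t>0$; $\alpha(m):=\sup_{t>0}|\sigma(t)|$. *)

theory Defs
  imports "HOL-Analysis.Analysis"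
begin

definition sigma :: "(real \<Rightarrow> real) \<Rightarrow> (real \<Rightarrow> real) \<Rightarrow> real \<Rightarrow> real" where
  "sigma f m t = m t / f t - 1"

definition alpha :: "(real \<Rightarrow> real) \<Rightarrow> (real \<Rightarrow> real) \<Rightarrow> ereal" where
  "alpha f m = (SUP t\<in>{0<..}. ereal \<bar>sigma f m t\<bar>)"

end

theory Submission
  imports Defs
begin

lemma aux_sq:
  fixes F s :: real
  assumes F: "F > 0" and s: "1 + s > 0"
  shows "1 / F\<^sup>2 - 1 / ((1 + s) * F)\<^sup>2 = s * (2 + s) / (1 + s)\<^sup>2 * (1 / F\<^sup>2)"
proof -
  have a: "(1+s)\<^sup>2 \<noteq> 0" "F\<^sup>2 \<noteq> 0" using F s by auto
  have g: "\<And>q G::real. q \<noteq> 0 \<Longrightarrow> G \<noteq> 0 \<Longrightarrow> 1 / G - 1 / (q * G) = (q - 1) / q * (1 / G)"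
    by (simp add: field_simps)
  have "(1 + s)\<^sup>2 - 1 = s * (2 + s)" by (simp add: power2_eq_square algebra_simps)
  thus ?thesis using g[OF a] by (simp add: power_mult_distrib)
qed

theorem lemma2p5:
  fixes K G f f' m m' :: "real \<Rightarrow> real" and a b :: real
  assumes contK: "continuous_on {0..} K"
    and contG: "continuous_on {0..} G"
    and f_deriv: "\<And>t. t \<ge> 0 \<Longrightarrow> (f has_real_derivative f' t) (at t within {0..})"
    and f'_deriv: "\<And>t. t \<ge> 0 \<Longrightarrow> (f' has_real_derivative (- K t * f t)) (at t within {0..})"
    and f_pos: "\<And>t. t > 0 \<Longrightarrow> f t > 0"
    and f_int: "(\<lambda>t. 1 / (f t)\<^sup>2) integrable_on {1..}"
    and m_deriv: "\<And>t. t \<ge> 0 \<Longrightarrow> (m has_real_derivative m' t) (at t within {0..})"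
    and m'_deriv: "\<And>t. t \<ge> 0 \<Longrightarrow> (m' has_real_derivative (- G t * m t)) (at t within {0..})"
    and init0: "m 0 = f 0"
    and init1: "m' 0 = f' 0"
    and ab: "1 \<le> a" "a \<le> b"
    and supp: "\<And>t. t \<ge> 0 \<Longrightarrow> t \<notin> {a..b} \<Longrightarrow> G t = K t"
    and alpha_lt: "alpha f m < 1"
  shows "(\<forall>t>0. m t > 0)
    \<and> (\<lambda>t. \<bar>1 / (f t)\<^sup>2 - 1 / (m t)\<^sup>2\<bar>) integrable_on {1..}
    \<and> integral {1..} (\<lambda>t. \<bar>1 / (f t)\<^sup>2 - 1 / (m t)\<^sup>2\<bar>)
        \<le> (2 + real_of_ereal (alpha f m)) * real_of_ereal (alpha f m)
             / (1 - real_of_ereal (alpha f m))\<^sup>2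
           * integral {a..} (\<lambda>t. 1 / (f t)\<^sup>2)"
proof -
  have cont_within: "\<And>g g' t S. (g has_real_derivative g') (at t within S) \<Longrightarrow> continuous (at t within S) g"
    by (rule DERIV_continuous)
  \<comment> \<open>ODE uniqueness on [0,a)\<close>
  have eqa: "m T = f T" if T: "0 \<le> T" "T < a" for T
  proof -
    define u where "u t = m t - f t" for t
    define v where "v t = m' t - f' t" for t
    have "compact ((\<lambda>t. 1 - K t) ` {0..T})"
      by (rule compact_continuous_image)
        (auto intro!: continuous_intros continuous_on_subset[OF contK])
    then have "bounded ((\<lambda>t. 1 - K t) ` {0..T})" by (rule compact_imp_bounded)
    then obtain B where B0: "\<forall>x\<in>(\<lambda>t. 1 - K t) ` {0..T}. norm x \<le> B"
      unfolding bounded_iff by blast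
    have B: "\<bar>1 - K t\<bar> \<le> B" if "t \<in> {0..T}" for t using B0 that by auto
    define E where "E t = ((u t)\<^sup>2 + (v t)\<^sup>2) * exp (- B * t)" for t
    have dE: "(E has_real_derivative ((2 * u t * v t * (1 - K t) - B * ((u t)\<^sup>2 + (v t)\<^sup>2)) * exp (- B * t))) (at t within {0..T})"
      if t: "t \<in> {0..T}" for t
    proof -
      have GK: "G t = K t" using supp[of t] t T by auto
      have du: "(u has_real_derivative v t) (at t within {0..T})"
        unfolding u_def v_def
        by (rule DERIV_subset[where s="{0..}"]) (use t in \<open>auto intro!: derivative_eq_intros m_deriv f_deriv\<close>)
      have dv: "(v has_real_derivative (- K t * u t)) (at t within {0..T})"
        unfolding u_def v_def
        by (rule DERIV_subset[where s="{0..}"])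
           (use t GK in \<open>auto intro!: derivative_eq_intros m'_deriv f'_deriv simp: algebra_simps\<close>)
      show ?thesis unfolding E_def
        by (rule derivative_eq_intros du dv refl | simp)+ (simp add: algebra_simps power2_eq_square)
    qed
    have "E T \<le> E 0"
    proof (rule DERIV_nonpos_imp_decreasing_open[OF T(1)])
      fix x assume x: "0 < x" "x < T"
      have "at x within {0..T} = at x" using x by (intro at_within_interior) auto
      moreover have "(2 * u x * v x * (1 - K x) - B * ((u x)\<^sup>2 + (v x)\<^sup>2)) * exp (- B * x) \<le> 0"
      proof -
        have b: "\<bar>1 - K x\<bar> \<le> B" using B x by auto
        have sq: "2 * \<bar>u x\<bar> * \<bar>v x\<bar> \<le> (u x)\<^sup>2 + (v x)\<^sup>2"
        proof -
          have "0 \<le> (\<bar>u x\<bar> - \<bar>v x\<bar>)\<^sup>2" by simp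
          thus ?thesis by (simp add: power2_diff)
        qed
        have "2 * u x * v x * (1 - K x) \<le> \<bar>2 * u x * v x\<bar> * \<bar>1 - K x\<bar>"
          by (metis abs_ge_self abs_mult)
        also have "\<dots> \<le> ((u x)\<^sup>2 + (v x)\<^sup>2) * \<bar>1 - K x\<bar>"
          by (intro mult_right_mono) (use sq in \<open>auto simp: abs_mult\<close>)
        also have "\<dots> \<le> ((u x)\<^sup>2 + (v x)\<^sup>2) * B"
          by (intro mult_left_mono b) auto
        finally have "2 * u x * v x * (1 - K x) - B * ((u x)\<^sup>2 + (v x)\<^sup>2) \<le> 0" by (simp add: algebra_simps)
        thus ?thesis by (simp add: mult_nonpos_nonneg)
      qed
      ultimately show "\<exists>y. (E has_real_derivative y) (at x) \<and> y \<le> 0"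
        using dE[of x] x by auto
    next
      show "continuous_on {0..T} E"
        unfolding continuous_on_eq_continuous_within using dE cont_within by blast
    qed
    moreover have "E 0 = 0" using init0 init1 by (simp add: E_def u_def v_def)
    ultimately have "(u T)\<^sup>2 + (v T)\<^sup>2 \<le> 0"
      by (simp add: E_def mult_le_0_iff)
    hence "(u T)\<^sup>2 = 0" using zero_le_power2[of "u T"] zero_le_power2[of "v T"] by linarith
    hence "u T = 0" by simp
    thus ?thesis by (simp add: u_def)
  qed
  define A where "A = real_of_ereal (alpha f m)"
  have sig_le: "ereal \<bar>sigma f m t\<bar> \<le> alpha f m" if "t > 0" for t
    unfolding alpha_def using that by (intro SUP_upper) auto
  have "(0::ereal) \<le> ereal \<bar>sigma f m 1\<bar>" by simp
  then have alpha_ge: "0 \<le> alpha f m" using order_trans[OF _ sig_le[of 1]] by simp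
  have aeq: "alpha f m = ereal A" unfolding A_def using alpha_ge alpha_lt
    by (cases "alpha f m") auto
  have A0: "0 \<le> A" and A1: "A < 1" using alpha_ge alpha_lt aeq by auto
  have sig: "\<bar>m t / f t - 1\<bar> \<le> A" if "t > 0" for t
    using sig_le[OF that] aeq by (simp add: sigma_def)
  have mpos: "m t > 0" if "t > 0" for t
  proof -
    have "m t / f t > 0" using sig[OF that] A1 by linarith
    thus ?thesis using f_pos[OF that] by (simp add: zero_less_divide_iff)
  qed
  define C where "C = (2 + A) * A / (1 - A)\<^sup>2"
  have C0: "0 \<le> C" unfolding C_def using A0 A1 by auto
  define g where "g t = \<bar>1 / (f t)\<^sup>2 - 1 / (m t)\<^sup>2\<bar>" for t
  have gbound: "g t \<le> C * (1 / (f t)\<^sup>2)" if "t > 0" for t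
  proof -
    define s where "s = m t / f t - 1"
    have ft: "f t > 0" and mt: "m t > 0" using f_pos mpos that by auto
    have ms: "m t = (1 + s) * f t" using ft by (simp add: s_def field_simps)
    have sA: "\<bar>s\<bar> \<le> A" using sig[OF that] by (simp add: s_def)
    have s1: "1 + s > 0" using sA A1 by linarith
    have e: "1 / (f t)\<^sup>2 - 1 / (m t)\<^sup>2 = s * (2 + s) / (1 + s)\<^sup>2 * (1 / (f t)\<^sup>2)"
      unfolding ms by (rule aux_sq[OF ft s1])
    have "g t = \<bar>s * (2 + s)\<bar> / (1 + s)\<^sup>2 * (1 / (f t)\<^sup>2)"
      unfolding g_def e by (simp add: abs_mult abs_divide)
    also have "\<bar>s * (2 + s)\<bar> / (1 + s)\<^sup>2 \<le> C"
    proof -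
      have n: "\<bar>s * (2 + s)\<bar> \<le> A * (2 + A)"
      proof -
        have "\<bar>2 + s\<bar> \<le> 2 + A" using sA s1 by linarith
        hence "\<bar>s\<bar> * \<bar>2 + s\<bar> \<le> A * (2 + A)" using sA by (intro mult_mono) auto
        thus ?thesis by (simp add: abs_mult)
      qed
      have d: "(1 - A)\<^sup>2 \<le> (1 + s)\<^sup>2"
        using sA A1 by (intro power_mono) auto
      have "\<bar>s * (2 + s)\<bar> / (1 + s)\<^sup>2 \<le> A * (2 + A) / (1 + s)\<^sup>2"
        using n s1 by (intro divide_right_mono) auto
      also have "\<dots> \<le> A * (2 + A) / (1 - A)\<^sup>2"
        using d A0 A1 s1 by (intro divide_left_mono) auto
      finally show ?thesis by (simp add: C_def mult.commute)
    qed
    hence "\<bar>s * (2 + s)\<bar> / (1 + s)\<^sup>2 * (1 / (f t)\<^sup>2) \<le> C * (1 / (f t)\<^sup>2)"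
      by (intro mult_right_mono) auto
    finally show ?thesis .
  qed
  have gzero: "g t = 0" if "0 \<le> t" "t < a" for t
    using eqa[OF that] by (simp add: g_def)
  have contf: "continuous_on {0..} f"
    unfolding continuous_on_eq_continuous_within using f_deriv cont_within by blast
  have contm: "continuous_on {0..} m"
    unfolding continuous_on_eq_continuous_within using m_deriv cont_within by blast
  have contg: "continuous_on {1..} g"
  proof -
    have cf1: "continuous_on {1..} f" by (rule continuous_on_subset[OF contf]) auto
    have cm1: "continuous_on {1..} m" by (rule continuous_on_subset[OF contm]) auto
    have nz: "\<And>t. t \<in> {1..} \<Longrightarrow> (f t)\<^sup>2 \<noteq> 0 \<and> (m t)\<^sup>2 \<noteq> 0"
      using f_pos mpos by (metis atLeast_iff less_le_trans zero_less_one power_not_zero less_irrefl)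
    show ?thesis unfolding g_def
      by (intro continuous_intros cf1 cm1) (use nz in auto)
  qed
  have meas: "g \<in> borel_measurable (lebesgue_on {1..})"
    by (rule continuous_imp_measurable_on_sets_lebesgue[OF contg]) auto
  have absf: "(\<lambda>t. 1 / (f t)\<^sup>2) absolutely_integrable_on {1..}"
    by (rule nonnegative_absolutely_integrable[OF f_int]) auto
  have absa: "(\<lambda>t. 1 / (f t)\<^sup>2) absolutely_integrable_on {a..}"
    using set_integrable_subset[OF absf, of "{a..}"] ab by auto
  have inta: "(\<lambda>t. 1 / (f t)\<^sup>2) integrable_on {a..}"
    using absa set_lebesgue_integral_eq_integral(1) by blast
  define h where "h t = (if t \<in> {a..} then C * (1 / (f t)\<^sup>2) else 0)" for t
  have inth: "h integrable_on {1..}"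
    unfolding h_def integrable_restrict_Int using inta ab
    using integrable_on_cmult_right[OF inta, of C] by (simp add: Int_absorb2)
  have inth_eq: "integral {1..} h = C * integral {a..} (\<lambda>t. 1 / (f t)\<^sup>2)"
    unfolding h_def integral_restrict_Int using ab integral_mult_right[of "{a..}" C "\<lambda>t. 1 / (f t)\<^sup>2"]
    by (simp add: Int_absorb2)
  have gh: "\<bar>g t\<bar> \<le> h t" if "t \<in> {1..}" for t
    using that gbound[of t] gzero[of t] by (auto simp: h_def g_def)
  have intg: "g integrable_on {1..}"
    by (rule measurable_bounded_by_integrable_imp_integrable_real[OF meas inth gh]) auto
  have "integral {1..} g \<le> integral {1..} h"
    using gh by (intro integral_le[OF intg inth]) (meson abs_ge_self order_trans)
  thus ?thesis
    using mpos intg inth_eq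
    by (simp add: g_def[abs_def] C_def A_def[symmetric])
qed

end
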